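(* Let $\langle \mathsf{E}, \mathsf{po}, \mathsf{mo}\rangle$ be a partial 1-Writer execution graph in which $\mathsf{mo}$ agrees with $\mathsf{po}$, and let $\mathsf{rf}_1,\mathsf{rf}_2$ be two reads-from relations over it. (1) If $\mathsf{rf}_1 \sqsubseteq \mathsf{rf}_2$ and $\mathsf{po}\cup\mathsf{rf}_1$ has a cycle, then $\mathsf{po}\cup\mathsf{rf}_2$ has a cycle. (2) If both $\mathsf{rf}_1$ and $\mathsf{rf}_2$ satisfy weak-read-coherence, then $\min(\mathsf{rf}_1,\mathsf{rf}_2)$ also satisfies weak-read-coherence.
   Context: Events are reads $\mathtt{r}(x,v)$ or writes $\mathtt{w}(x,v)$ on a variable $x$ with value $v$, each belonging to a thread; $\mathsf{po}$ (program order) is a strict partial order totally ordering the events of each thread and relating no events of different threads. The graph is 1-Writer: for every variable $x$ all writes to $x$ lie in a single thread. $\mathsf{mo}=\bigcup_x\mathsf{mo}_x$ with $\mathsf{mo}_x$ a strict total order on writes to $x$, and "agrees with $\mathsf{po}$" means $w\,\mathsf{mo}\,w'$ implies $w\,\mathsf{po}\,w'$. A reads-from relation $\mathsf{rf}$ maps every read $r$ to a unique write $\mathsf{rf}^{-1}(r)$ with the same variable and value. For reads-from relations, $\mathsf{rf}_1\sqsubseteq\mathsf{rf}_2$ iff for every read $r$, $\mathsf{rf}_1^{-1}(r)\,\mathsf{po}^*\,\mathsf{rf}_2^{-1}(r)$ (reflexive-transitive closure). $\min(\mathsf{rf}_1,\mathsf{rf}_2)$ is the reads-from relation mapping every read $r$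 to the $\mathsf{po}$-smaller of $\mathsf{rf}_1^{-1}(r)$ and $\mathsf{rf}_2^{-1}(r)$ (these lie in the same writer thread). $\mathsf{rf}$ satisfies weak-read-coherence if, with $\mathsf{hb}=(\mathsf{po}\cup\mathsf{rf})^+$, there is no read $r$ of a variable $x$ and writes $w,w'$ of $x$ with $w\,\mathsf{rf}\,r$, $w\,\mathsf{hb}\,w'$ and $w'\,\mathsf{hb}\,r$. *)

theory Defs
  imports Main
begin

datatype ('x, 'v) label = Rd (loc: 'x) (val: 'v) | Wr (loc: 'x) (val: 'v)

definition is_rd :: "('x,'v) label \<Rightarrow> bool" where
  "is_rd l = (case l of Rd _ _ \<Rightarrow> True | Wr _ _ \<Rightarrow> False)"

definition is_wr :: "('x,'v) label \<Rightarrow> bool" where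
  "is_wr l = (case l of Rd _ _ \<Rightarrow> False | Wr _ _ \<Rightarrow> True)"

definition reads :: "'e set \<Rightarrow> ('e \<Rightarrow> ('x,'v) label) \<Rightarrow> 'e set" where
  "reads E lab = {e \<in> E. is_rd (lab e)}"

definition writes :: "'e set \<Rightarrow> ('e \<Rightarrow> ('x,'v) label) \<Rightarrow> 'e set" where
  "writes E lab = {e \<in> E. is_wr (lab e)}"

definition writes_to :: "'e set \<Rightarrow> ('e \<Rightarrow> ('x,'v) label) \<Rightarrow> 'x \<Rightarrow> 'e set" where
  "writes_to E lab x = {e \<in> writes E lab. loc (lab e) = x}"

definition program_order ::
  "'e set \<Rightarrow> ('e \<Rightarrow> 't) \<Rightarrow> ('e \<times> 'e) set \<Rightarrow> bool" where
  "program_order E thr po \<longleftrightarrow>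
     po \<subseteq> E \<times> E \<and> irrefl po \<and> trans po \<and>
     (\<forall>a\<in>E. \<forall>b\<in>E. thr a = thr b \<and> a \<noteq> b \<longrightarrow> (a, b) \<in> po \<or> (b, a) \<in> po) \<and>
     (\<forall>a b. (a, b) \<in> po \<longrightarrow> thr a = thr b)"

definition one_writer ::
  "'e set \<Rightarrow> ('e \<Rightarrow> 't) \<Rightarrow> ('e \<Rightarrow> ('x,'v) label) \<Rightarrow> bool" where
  "one_writer E thr lab \<longleftrightarrow>
     (\<forall>x. \<forall>w\<in>writes_to E lab x. \<forall>w'\<in>writes_to E lab x. thr w = thr w')"

definition modification_order ::
  "'e set \<Rightarrow> ('e \<Rightarrow> ('x,'v) label) \<Rightarrow> ('e \<times> 'e) set \<Rightarrow> bool" where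
  "modification_order E lab mo \<longleftrightarrow>
     mo = (\<Union>x. mo \<inter> (writes_to E lab x \<times> writes_to E lab x)) \<and>
     (\<forall>x. let mx = mo \<inter> (writes_to E lab x \<times> writes_to E lab x) in
        irrefl mx \<and> trans mx \<and>
        (\<forall>a\<in>writes_to E lab x. \<forall>b\<in>writes_to E lab x. a \<noteq> b \<longrightarrow> (a, b) \<in> mx \<or> (b, a) \<in> mx))"

definition mo_agrees_po :: "('e \<times> 'e) set \<Rightarrow> ('e \<times> 'e) set \<Rightarrow> bool" where
  "mo_agrees_po mo po \<longleftrightarrow> mo \<subseteq> po"

definition one_writer_graph ::
  "'e set \<Rightarrow> ('e \<Rightarrow> 't) \<Rightarrow> ('e \<Rightarrow> ('x,'v) label) \<Rightarrow> ('e \<times> 'e) set \<Rightarrow> ('e \<times> 'e) set \<Rightarrow> bool" where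
  "one_writer_graph E thr lab po mo \<longleftrightarrow>
     program_order E thr po \<and> one_writer E thr lab \<and>
     modification_order E lab mo \<and> mo_agrees_po mo po"

definition reads_from ::
  "'e set \<Rightarrow> ('e \<Rightarrow> ('x,'v) label) \<Rightarrow> ('e \<times> 'e) set \<Rightarrow> bool" where
  "reads_from E lab rf \<longleftrightarrow>
     rf \<subseteq> writes E lab \<times> reads E lab \<and>
     (\<forall>r\<in>reads E lab. \<exists>!w. (w, r) \<in> rf) \<and>
     (\<forall>w r. (w, r) \<in> rf \<longrightarrow> loc (lab w) = loc (lab r) \<and> val (lab w) = val (lab r))"

definition rf_le ::
  "'e set \<Rightarrow> ('e \<Rightarrow> ('x,'v) label) \<Rightarrow> ('e \<times> 'e) set \<Rightarrow> ('e \<times> 'e) set \<Rightarrow> ('e \<times> 'e) set \<Rightarrow> bool" where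
  "rf_le E lab po rf1 rf2 \<longleftrightarrow>
     (\<forall>r\<in>reads E lab. \<forall>w1 w2. (w1, r) \<in> rf1 \<and> (w2, r) \<in> rf2 \<longrightarrow> (w1, w2) \<in> po\<^sup>*)"

definition rf_min ::
  "('e \<times> 'e) set \<Rightarrow> ('e \<times> 'e) set \<Rightarrow> ('e \<times> 'e) set \<Rightarrow> ('e \<times> 'e) set" where
  "rf_min po rf1 rf2 =
     {(w, r). \<exists>w1 w2. (w1, r) \<in> rf1 \<and> (w2, r) \<in> rf2 \<and>
        w = (if (w1, w2) \<in> po\<^sup>* then w1 else w2)}"

definition has_cycle :: "('e \<times> 'e) set \<Rightarrow> bool" where
  "has_cycle R \<longleftrightarrow> (\<exists>e. (e, e) \<in> R\<^sup>+)"

definition weak_read_coherent ::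
  "'e set \<Rightarrow> ('e \<Rightarrow> ('x,'v) label) \<Rightarrow> ('e \<times> 'e) set \<Rightarrow> ('e \<times> 'e) set \<Rightarrow> bool" where
  "weak_read_coherent E lab po rf \<longleftrightarrow>
     \<not> (\<exists>r\<in>reads E lab. \<exists>w\<in>writes_to E lab (loc (lab r)). \<exists>w'\<in>writes_to E lab (loc (lab r)).
          (w, r) \<in> rf \<and> (w, w') \<in> (po \<union> rf)\<^sup>+ \<and> (w', r) \<in> (po \<union> rf)\<^sup>+)"

end

theory Submission
  imports Defs
begin

lemma hb_mono:
  assumes "\<forall>u s. (u, s) \<in> rf \<longrightarrow> (\<exists>u'. (u, u') \<in> po\<^sup>* \<and> (u', s) \<in> rf')"
  shows "(po \<union> rf)\<^sup>+ \<subseteq> (po \<union> rf')\<^sup>+"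
proof -
  have "po \<union> rf \<subseteq> (po \<union> rf')\<^sup>+"
  proof
    fix p assume p: "p \<in> po \<union> rf"
    obtain a b where ab: "p = (a, b)" by fastforce
    show "p \<in> (po \<union> rf')\<^sup>+"
    proof (cases "(a, b) \<in> po")
      case True thus ?thesis using ab by auto
    next
      case False
      then have "(a, b) \<in> rf" using p ab by auto
      then obtain u' where u: "(a, u') \<in> po\<^sup>*" "(u', b) \<in> rf'" using assms by blast
      have "(a, u') \<in> (po \<union> rf')\<^sup>*" using u(1) rtrancl_mono[of po "po \<union> rf'"] by blast
      moreover have "(u', b) \<in> (po \<union> rf')" using u(2) by blast
      ultimately show ?thesis using ab by (meson rtrancl_into_trancl1)
    qed
  qed
  then have "(po \<union> rf)\<^sup>+ \<subseteq> ((po \<union> rf')\<^sup>+)\<^sup>+" using trancl_mono by blast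
  then show ?thesis by simp
qed

theorem lemma3:
  fixes E :: "'e set" and thr :: "'e \<Rightarrow> 't" and lab :: "'e \<Rightarrow> ('x,'v) label"
    and po mo rf1 rf2 :: "('e \<times> 'e) set"
  assumes "one_writer_graph E thr lab po mo"
    and "reads_from E lab rf1" and "reads_from E lab rf2"
  shows "(rf_le E lab po rf1 rf2 \<and> has_cycle (po \<union> rf1) \<longrightarrow> has_cycle (po \<union> rf2))
     \<and> (weak_read_coherent E lab po rf1 \<and> weak_read_coherent E lab po rf2
          \<longrightarrow> weak_read_coherent E lab po (rf_min po rf1 rf2))"
proof (intro conjI impI)
  have PO: "program_order E thr po" and OW: "one_writer E thr lab"
    using assms(1) unfolding one_writer_graph_def by auto
  assume H: "rf_le E lab po rf1 rf2 \<and> has_cycle (po \<union> rf1)"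
  have "\<forall>u s. (u, s) \<in> rf1 \<longrightarrow> (\<exists>u'. (u, u') \<in> po\<^sup>* \<and> (u', s) \<in> rf2)"
  proof (intro allI impI)
    fix u s assume us: "(u, s) \<in> rf1"
    then have "s \<in> reads E lab" using assms(2) unfolding reads_from_def by auto
    then obtain u' where "(u', s) \<in> rf2" using assms(3) unfolding reads_from_def by blast
    then show "\<exists>u'. (u, u') \<in> po\<^sup>* \<and> (u', s) \<in> rf2"
      using H us \<open>s \<in> reads E lab\<close> unfolding rf_le_def by blast
  qed
  then show "has_cycle (po \<union> rf2)" using H hb_mono unfolding has_cycle_def by blast
next
  have PO: "program_order E thr po" and OW: "one_writer E thr lab"
    using assms(1) unfolding one_writer_graph_def by auto
  assume H: "weak_read_coherent E lab po rf1 \<and> weak_read_coherent E lab po rf2"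
  let ?m = "rf_min po rf1 rf2"
  have tot: "(w2, w1) \<in> po\<^sup>*" if "(w1, r) \<in> rf1" "(w2, r) \<in> rf2" "(w1, w2) \<notin> po\<^sup>*" for w1 w2 r
  proof -
    have w1: "w1 \<in> writes_to E lab (loc (lab r))"
      using that(1) assms(2) unfolding reads_from_def writes_to_def by auto
    have w2: "w2 \<in> writes_to E lab (loc (lab r))"
      using that(2) assms(3) unfolding reads_from_def writes_to_def by auto
    have "thr w1 = thr w2" using OW w1 w2 unfolding one_writer_def by blast
    moreover have "w1 \<in> E" "w2 \<in> E" using w1 w2 unfolding writes_to_def writes_def by auto
    ultimately have "w1 = w2 \<or> (w1, w2) \<in> po \<or> (w2, w1) \<in> po"
      using PO unfolding program_order_def by blast
    then show ?thesis using that(3) by auto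
  qed
  have m1: "\<forall>u s. (u, s) \<in> ?m \<longrightarrow> (\<exists>u'. (u, u') \<in> po\<^sup>* \<and> (u', s) \<in> rf1)"
    unfolding rf_min_def using tot by fastforce
  have m2: "\<forall>u s. (u, s) \<in> ?m \<longrightarrow> (\<exists>u'. (u, u') \<in> po\<^sup>* \<and> (u', s) \<in> rf2)"
    unfolding rf_min_def by fastforce
  have s1: "(po \<union> ?m)\<^sup>+ \<subseteq> (po \<union> rf1)\<^sup>+" using hb_mono[OF m1] .
  have s2: "(po \<union> ?m)\<^sup>+ \<subseteq> (po \<union> rf2)\<^sup>+" using hb_mono[OF m2] .
  have src: "(w, r) \<in> rf1 \<or> (w, r) \<in> rf2" if "(w, r) \<in> ?m" for w r
    using that unfolding rf_min_def by (auto split: if_splits)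
  show "weak_read_coherent E lab po ?m"
    unfolding weak_read_coherent_def
  proof
    assume "\<exists>r\<in>reads E lab. \<exists>w\<in>writes_to E lab (loc (lab r)). \<exists>w'\<in>writes_to E lab (loc (lab r)).
          (w, r) \<in> ?m \<and> (w, w') \<in> (po \<union> ?m)\<^sup>+ \<and> (w', r) \<in> (po \<union> ?m)\<^sup>+"
    then obtain r w w' where r: "r \<in> reads E lab" "w \<in> writes_to E lab (loc (lab r))"
      "w' \<in> writes_to E lab (loc (lab r))" "(w, r) \<in> ?m" "(w, w') \<in> (po \<union> ?m)\<^sup>+"
      "(w', r) \<in> (po \<union> ?m)\<^sup>+" by blast
    from src[OF r(4)] show False
    proof
      assume "(w, r) \<in> rf1"
      then show False using H r s1 unfolding weak_read_coherent_def by blast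
    next
      assume "(w, r) \<in> rf2"
      then show False using H r s2 unfolding weak_read_coherent_def by blast
    qed
  qed
qed

end
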